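(* Let $G$ be a countable directed graph, let $v_{1}\neq v_{2}$ be vertices of $G$, and let $x\in W^{*}(G)$ be a $D_{G}$-valued random variable with Fourier expansion $$ x=\sum_{l_{1}=v_{1}l_{1}v_{2}\in FP(G:x)}p_{l_{1}}L_{l_{1}}+\sum_{l_{2}=v_{2}l_{2}v_{1}\in FP(G:x)}p_{l_{2}}L_{l_{2}}^{*}. $$ Then for every $n\in\mathbb{N}$ and all $d_{1},\dots,d_{n}\in D_{G}$, the $n$-th $D_G$-valued moment $E(d_{1}x d_{2}x\cdots d_{n}x)$ and the $n$-th $D_G$-valued cumulant $k_{n}(d_{1}x,\dots,d_{n}x)$ of $x$ are both $0$.
   Context: $G$ is a countable directed graph with vertex set $V(G)$; $\mathbb{F}^{+}(G)$ is its free semigroupoid (all vertices and all admissible finite paths) and $FP(G)$ the set of finite paths; $w=xwy$ indicates that the path $w$ has source $x$ and range $y$. On $H_{G}=l^{2}(\mathbb{F}^{+}(G))$ with orthonormal basis $\{\xi_{w}\}$, $L_{w}\xi_{h}=\xi_{wh}$ if $wh\in\mathbb{F}^{+}(G)$ and $0$ otherwise; $L_{w}^{*}$ is the adjoint. $W^{*}(G)$ is the weak-operator closure of the $*$-algebra generated by all $L_{w},L_{w}^{*}$, and $D_{G}$ is the von Neumann subalgebra generated by the projections $L_{v}$, $v\in V(G)$. Each $a\in W^{*}(G)$ has a Fourier expansion $a=\sum_{w\in\mathbb{F}^{+}(G:a),u_{w}\in\{1,*\}}p_{w}L_{w}^{u_{w}}$ ($p_w\in\mathbb{C}$ nonzero)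 with support $\mathbb{F}^{+}(G:a)$, $V(G:a)=\mathbb{F}^{+}(G:a)\cap V(G)$, $FP(G:a)=\mathbb{F}^{+}(G:a)\cap FP(G)$. The conditional expectation $E:W^{*}(G)\to D_{G}$ is $E(a)=\sum_{v\in V(G:a)}p_{v}L_{v}$, making $(W^{*}(G),E)$ a $W^{*}$-probability space with amalgamation over $D_{G}$. The $n$-th $D_G$-valued moment of $a$ is $E(d_1a\cdots d_na)$ and the $n$-th $D_G$-valued cumulant $k_n(d_1a,\dots,d_na)$ is Speicher's operator-valued (amalgamated) free cumulant with respect to $E$, for $d_j\in D_G$. *)

theory Defs
  imports "HOL-Analysis.Analysis"
begin

text \<open>Vertex set = UNIV of the vertex type, edge set = UNIV of the edge type;
  countability is imposed by the sort countable in the main theorem.\<close>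
record ('v, 'e) dgraph =
  gsrc :: "'e \<Rightarrow> 'v"
  grng :: "'e \<Rightarrow> 'v"

text \<open>Elements of the free semigroupoid: vertices and finite paths (edge lists).\<close>
datatype ('v, 'e) fsg = Vx 'v | Pth "'e list"

definition FSG :: "('v, 'e) dgraph \<Rightarrow> ('v, 'e) fsg set" where
  "FSG G = {w. case w of Vx v \<Rightarrow> True
                | Pth es \<Rightarrow> es \<noteq> [] \<and>
                    (\<forall>i. i + 1 < length es \<longrightarrow> grng G (es ! i) = gsrc G (es ! (i + 1)))}"

text \<open>Paths w with w = x w y (source x, range y).\<close>
definition paths_from_to :: "('v, 'e) dgraph \<Rightarrow> 'v \<Rightarrow> 'v \<Rightarrow> ('v, 'e) fsg set" where
  "paths_from_to G x y = {Pth es | es. Pth es \<in> FSG G \<and> gsrc G (hd es) = x \<and> grng G (last es) = y}"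

text \<open>Partial product of the free semigroupoid (None = the product is not admissible).\<close>
fun fmult :: "('v, 'e) dgraph \<Rightarrow> ('v, 'e) fsg \<Rightarrow> ('v, 'e) fsg \<Rightarrow> ('v, 'e) fsg option" where
  "fmult G (Vx x) (Vx y) = (if x = y then Some (Vx x) else None)"
| "fmult G (Vx x) (Pth es) = (if gsrc G (hd es) = x then Some (Pth es) else None)"
| "fmult G (Pth es) (Vx y) = (if grng G (last es) = y then Some (Pth es) else None)"
| "fmult G (Pth es) (Pth fs) =
     (if grng G (last es) = gsrc G (hd fs) then Some (Pth (es @ fs)) else None)"

definition l2 :: "'a set \<Rightarrow> ('a \<Rightarrow> complex) set" where
  "l2 S = {f. (\<forall>k. k \<notin> S \<longrightarrow> f k = 0) \<and> (\<lambda>k. (cmod (f k))\<^sup>2) summable_on UNIV}"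

definition ip :: "('a \<Rightarrow> complex) \<Rightarrow> ('a \<Rightarrow> complex) \<Rightarrow> complex" where
  "ip f g = infsum (\<lambda>k. f k * cnj (g k)) UNIV"

definition vnorm :: "('a \<Rightarrow> complex) \<Rightarrow> real" where
  "vnorm f = sqrt (infsum (\<lambda>k. (cmod (f k))\<^sup>2) UNIV)"

definition HG :: "('v, 'e) dgraph \<Rightarrow> (('v, 'e) fsg \<Rightarrow> complex) set" where
  "HG G = l2 (FSG G)"

definition xi :: "'a \<Rightarrow> ('a \<Rightarrow> complex)" where
  "xi w = (\<lambda>k. if k = w then 1 else 0)"

type_synonym ('v, 'e) op = "(('v, 'e) fsg \<Rightarrow> complex) \<Rightarrow> (('v, 'e) fsg \<Rightarrow> complex)"

text \<open>Bounded operators on H_G, normalised to be 0 outside H_G.\<close>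
definition bounded_op :: "('v, 'e) dgraph \<Rightarrow> ('v, 'e) op \<Rightarrow> bool" where
  "bounded_op G A \<longleftrightarrow>
     (\<forall>f \<in> HG G. A f \<in> HG G) \<and> (\<forall>f. f \<notin> HG G \<longrightarrow> A f = (\<lambda>k. 0)) \<and>
     (\<forall>f \<in> HG G. \<forall>g \<in> HG G. \<forall>c. A (\<lambda>k. c * f k + g k) = (\<lambda>k. c * A f k + A g k)) \<and>
     (\<exists>K. \<forall>f \<in> HG G. vnorm (A f) \<le> K * vnorm f)"

definition op_adj :: "('v, 'e) dgraph \<Rightarrow> ('v, 'e) op \<Rightarrow> ('v, 'e) op" where
  "op_adj G A = (SOME B. bounded_op G B \<and> (\<forall>f \<in> HG G. \<forall>g \<in> HG G. ip (A f) g = ip f (B g)))"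

definition op_id :: "('v, 'e) dgraph \<Rightarrow> ('v, 'e) op" where
  "op_id G = (\<lambda>f. if f \<in> HG G then f else (\<lambda>k. 0))"

definition op_zero :: "('v, 'e) op" where
  "op_zero = (\<lambda>f k. 0)"

definition op_add :: "('v, 'e) op \<Rightarrow> ('v, 'e) op \<Rightarrow> ('v, 'e) op" where
  "op_add A B = (\<lambda>f k. A f k + B f k)"

definition op_diff :: "('v, 'e) op \<Rightarrow> ('v, 'e) op \<Rightarrow> ('v, 'e) op" where
  "op_diff A B = (\<lambda>f k. A f k - B f k)"

definition op_smult :: "complex \<Rightarrow> ('v, 'e) op \<Rightarrow> ('v, 'e) op" where
  "op_smult c A = (\<lambda>f k. c * A f k)"

definition op_sum :: "('i \<Rightarrow> ('v, 'e) op) \<Rightarrow> 'i set \<Rightarrow> ('v, 'e) op" where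
  "op_sum T I = (\<lambda>f k. \<Sum>i\<in>I. T i f k)"

text \<open>The creation operators: L_w xi_h = xi_{wh} if wh is defined, 0 otherwise.\<close>
definition L :: "('v, 'e) dgraph \<Rightarrow> ('v, 'e) fsg \<Rightarrow> ('v, 'e) op" where
  "L G w = (\<lambda>f. if f \<in> HG G then
              (\<lambda>k. if \<exists>h \<in> FSG G. fmult G w h = Some k
                   then f (THE h. h \<in> FSG G \<and> fmult G w h = Some k) else 0)
            else (\<lambda>k. 0))"

inductive_set star_alg :: "('v, 'e) dgraph \<Rightarrow> ('v, 'e) op set \<Rightarrow> ('v, 'e) op set"
  for G :: "('v, 'e) dgraph" and S :: "('v, 'e) op set" where
  base: "A \<in> S \<Longrightarrow> A \<in> star_alg G S"
| add: "A \<in> star_alg G S \<Longrightarrow> B \<in> star_alg G S \<Longrightarrow> op_add A B \<in> star_alg G S"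
| smult: "A \<in> star_alg G S \<Longrightarrow> op_smult c A \<in> star_alg G S"
| comp: "A \<in> star_alg G S \<Longrightarrow> B \<in> star_alg G S \<Longrightarrow> A \<circ> B \<in> star_alg G S"
| adj: "A \<in> star_alg G S \<Longrightarrow> op_adj G A \<in> star_alg G S"

definition wot_closure :: "('v, 'e) dgraph \<Rightarrow> ('v, 'e) op set \<Rightarrow> ('v, 'e) op set" where
  "wot_closure G S = {A. bounded_op G A \<and>
     (\<forall>F. finite F \<longrightarrow> F \<subseteq> HG G \<times> HG G \<longrightarrow>
        (\<forall>\<epsilon>>0. \<exists>B\<in>S. \<forall>(f, g)\<in>F. cmod (ip (A f) g - ip (B f) g) < \<epsilon>))}"

definition WstarG :: "('v, 'e) dgraph \<Rightarrow> ('v, 'e) op set" where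
  "WstarG G = wot_closure G (star_alg G (L G ` FSG G))"

definition DG :: "('v, 'e) dgraph \<Rightarrow> ('v, 'e) op set" where
  "DG G = wot_closure G (star_alg G ((\<lambda>v. L G (Vx v)) ` UNIV))"

text \<open>Fourier coefficient p_v of a at the vertex v (coefficient of L_v).\<close>
definition vcoeff :: "('v, 'e) dgraph \<Rightarrow> ('v, 'e) op \<Rightarrow> 'v \<Rightarrow> complex" where
  "vcoeff G a v = ip (a (xi (Vx v))) (xi (Vx v))"

definition condexp :: "('v, 'e) dgraph \<Rightarrow> ('v, 'e) op \<Rightarrow> ('v, 'e) op" where
  "condexp G a = (\<lambda>f. if f \<in> HG G then
      (\<lambda>k. infsum (\<lambda>v. vcoeff G a v * L G (Vx v) f k) UNIV) else (\<lambda>k. 0))"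

primrec prod_ops :: "('v, 'e) dgraph \<Rightarrow> ('v, 'e) op list \<Rightarrow> ('v, 'e) op" where
  "prod_ops G [] = op_id G"
| "prod_ops G (a # as) = a \<circ> prod_ops G as"

definition Eprod :: "('v, 'e) dgraph \<Rightarrow> ('v, 'e) op list \<Rightarrow> ('v, 'e) op" where
  "Eprod G as = (if as = [] then op_id G else condexp G (prod_ops G as))"

text \<open>Given a list as = [a_0,...,a_{n-1}] and block indices is = [0 = i_1 < ... < i_s],
  the arguments a_{i_1} E(a_{i_1+1}...a_{i_2-1}), ..., a_{i_{s-1}} E(...), a_{i_s}.\<close>
definition blk_args :: "('v, 'e) dgraph \<Rightarrow> ('v, 'e) op list \<Rightarrow> nat list \<Rightarrow> ('v, 'e) op list" where
  "blk_args G as is = map (\<lambda>j. if j + 1 < length is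
        then (as ! (is ! j)) \<circ> Eprod G (take (is ! (j + 1) - is ! j - 1) (drop (is ! j + 1) as))
        else as ! (is ! j)) [0..<length is]"

text \<open>Speicher's operator-valued free cumulants, defined by the (recursive form of the)
  moment-cumulant formula E(a_1...a_n) = sum over pi in NC(n) of k_pi[a_1,...,a_n],
  grouping the non-crossing partitions according to the block {1 = i_1 < ... < i_s}
  containing 1.  The first argument is fuel (always = length of the list).\<close>
primrec kapf :: "('v, 'e) dgraph \<Rightarrow> nat \<Rightarrow> ('v, 'e) op list \<Rightarrow> ('v, 'e) op" where
  "kapf G 0 as = op_zero"
| "kapf G (Suc m) as =
     (if as = [] then op_zero else
      op_diff (condexp G (prod_ops G as))
        (op_sum (\<lambda>I. let is = 0 # sorted_list_of_set I in
                      kapf G m (blk_args G as is) \<circ> Eprod G (drop (last is + 1) as))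
                {I. I \<subseteq> {1..<length as} \<and> I \<noteq> {1..<length as}}))"

definition cumulant :: "('v, 'e) dgraph \<Rightarrow> ('v, 'e) op list \<Rightarrow> ('v, 'e) op" where
  "cumulant G as = kapf G (length as) as"

end

theory Submission
  imports Defs
begin

lemma HG_iff: "f \<in> HG G \<longleftrightarrow> (\<forall>k. k \<notin> FSG G \<longrightarrow> f k = 0) \<and> (\<lambda>k. (cmod (f k))\<^sup>2) summable_on UNIV"
  by (simp add: HG_def l2_def)

lemma HG_dom:
  assumes "g \<in> HG G" "\<And>k. cmod (f k) \<le> C * cmod (g k)"
  shows "f \<in> HG G"
proof -
  have z: "\<forall>k. k \<notin> FSG G \<longrightarrow> f k = 0"
    using assms HG_iff[of g G] by (metis mult_zero_right norm_le_zero_iff norm_zero)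
  have s: "(\<lambda>k. C\<^sup>2 * (cmod (g k))\<^sup>2) summable_on UNIV"
    using assms(1) HG_iff summable_on_cmult_right by blast
  have "(\<lambda>k. (cmod (f k))\<^sup>2) summable_on UNIV"
  proof (rule summable_on_comparison_test[OF s])
    fix k
    have "cmod (f k) \<le> C * cmod (g k)" by (rule assms(2))
    hence "(cmod (f k))\<^sup>2 \<le> (C * cmod (g k))\<^sup>2"
      by (meson norm_ge_zero power_mono)
    thus "(cmod (f k))\<^sup>2 \<le> C\<^sup>2 * (cmod (g k))\<^sup>2" by (simp add: power_mult_distrib)
  qed simp
  with z show ?thesis by (simp add: HG_iff)
qed

lemma sq2: "(a + b)\<^sup>2 \<le> 2 * a\<^sup>2 + 2 * (b::real)\<^sup>2"
proof -
  have "0 \<le> (a - b)\<^sup>2" by simp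
  thus ?thesis by (simp add: power2_eq_square algebra_simps)
qed

lemma HG_lin:
  assumes "f \<in> HG G" "g \<in> HG G"
  shows "(\<lambda>k. c * f k + g k) \<in> HG G"
proof -
  have z: "\<forall>k. k \<notin> FSG G \<longrightarrow> c * f k + g k = 0"
    using assms HG_iff by (metis add.right_neutral mult_zero_right)
  have s: "(\<lambda>k. 2 * (cmod c)\<^sup>2 * (cmod (f k))\<^sup>2 + 2 * (cmod (g k))\<^sup>2) summable_on UNIV"
    apply (rule summable_on_add)
    using assms HG_iff summable_on_cmult_right by blast+
  have "(\<lambda>k. (cmod (c * f k + g k))\<^sup>2) summable_on UNIV"
  proof (rule summable_on_comparison_test[OF s])
    fix k
    have "cmod (c * f k + g k) \<le> cmod c * cmod (f k) + cmod (g k)"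
      by (metis norm_mult norm_triangle_ineq)
    hence "(cmod (c * f k + g k))\<^sup>2 \<le> (cmod c * cmod (f k) + cmod (g k))\<^sup>2"
      by (meson norm_ge_zero power_mono)
    also have "\<dots> \<le> 2 * (cmod c)\<^sup>2 * (cmod (f k))\<^sup>2 + 2 * (cmod (g k))\<^sup>2"
      using sq2[of "cmod c * cmod (f k)" "cmod (g k)"] by (simp add: power_mult_distrib)
    finally show "(cmod (c * f k + g k))\<^sup>2 \<le> 2 * (cmod c)\<^sup>2 * (cmod (f k))\<^sup>2 + 2 * (cmod (g k))\<^sup>2" .
  qed simp
  with z show ?thesis by (simp add: HG_iff)
qed

lemma zero_HG: "(\<lambda>k. 0) \<in> HG G"
  by (simp add: HG_iff)

lemma xi_HG: "g \<in> FSG G \<Longrightarrow> xi g \<in> HG G"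
proof -
  assume g: "g \<in> FSG G"
  have "(\<lambda>k. (cmod (xi g k))\<^sup>2) summable_on UNIV \<longleftrightarrow> (\<lambda>k. (cmod (xi g k))\<^sup>2) summable_on {g}"
    by (rule summable_on_cong_neutral) (auto simp: xi_def)
  thus ?thesis using g by (auto simp: HG_iff xi_def)
qed

lemma ip_xi_right: "ip f (xi h) = f h"
proof -
  have "ip f (xi h) = infsum (\<lambda>k. f k * cnj (xi h k)) {h}"
    unfolding ip_def by (rule infsum_cong_neutral) (auto simp: xi_def)
  thus ?thesis by (simp add: xi_def)
qed

lemma ip_xi_left: "ip (xi h) f = cnj (f h)"
proof -
  have "ip (xi h) f = infsum (\<lambda>k. xi h k * cnj (f k)) {h}"
    unfolding ip_def by (rule infsum_cong_neutral) (auto simp: xi_def)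
  thus ?thesis by (simp add: xi_def)
qed

lemma bop_HG: "bounded_op G A \<Longrightarrow> A f \<in> HG G"
  unfolding bounded_op_def using zero_HG by metis

lemma bop_lin: "bounded_op G A \<Longrightarrow> f \<in> HG G \<Longrightarrow> g \<in> HG G \<Longrightarrow>
   A (\<lambda>k. c * f k + g k) = (\<lambda>k. c * A f k + A g k)"
  unfolding bounded_op_def by blast

lemma bop_zero: "bounded_op G A \<Longrightarrow> A (\<lambda>k. 0) = (\<lambda>k. 0)"
proof -
  assume A: "bounded_op G A"
  hence "A (\<lambda>k. (-1) * (\<lambda>k. 0) k + (\<lambda>k. 0) k) = (\<lambda>k. (-1) * A (\<lambda>k. 0) k + A (\<lambda>k. 0) k)"
    using bop_lin[OF A zero_HG zero_HG, of "-1"] by simp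
  thus ?thesis by simp
qed

lemma HG_point_le: assumes "g \<in> HG G" shows "cmod (g h) \<le> vnorm g"
proof -
  have s: "(\<lambda>k. (cmod (g k))\<^sup>2) summable_on UNIV" using assms HG_iff by blast
  have "infsum (\<lambda>k. (cmod (g k))\<^sup>2) {h} \<le> infsum (\<lambda>k. (cmod (g k))\<^sup>2) UNIV"
    by (rule infsum_mono_neutral) (use s in auto)
  hence "(cmod (g h))\<^sup>2 \<le> infsum (\<lambda>k. (cmod (g k))\<^sup>2) UNIV" by simp
  thus ?thesis unfolding vnorm_def by (metis norm_ge_zero real_le_rsqrt)
qed

lemma det:
  assumes A: "bounded_op G A" and f: "f \<in> HG G"
    and hyp: "\<forall>g\<in>FSG G. f g \<noteq> 0 \<longrightarrow> A (xi g) h = 0"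
  shows "A f h = 0"
proof (rule ccontr)
  assume ne: "A f h \<noteq> 0"
  define fr where "fr F = (\<lambda>k. if k \<in> F then f k else 0)" for F
  have frHG: "fr F \<in> HG G" for F
    by (rule HG_dom[OF f, of _ 1]) (auto simp: fr_def)
  have fin: "A (fr F) h = 0" if "finite F" "F \<subseteq> FSG G" for F
    using that
  proof (induction F rule: finite_induct)
    case empty
    have "fr {} = (\<lambda>k. 0)" by (simp add: fr_def)
    then show ?case using bop_zero[OF A] by simp
  next
    case (insert g F)
    have e: "fr (insert g F) = (\<lambda>k. f g * xi g k + fr F k)"
      using insert.hyps by (auto simp: fr_def xi_def)
    have g: "g \<in> FSG G" using insert.prems by auto
    have "A (fr (insert g F)) = (\<lambda>k. f g * A (xi g) k + A (fr F) k)"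
      unfolding e by (rule bop_lin[OF A xi_HG[OF g] frHG])
    then show ?case using insert g hyp by auto
  qed
  obtain K where K: "\<forall>u\<in>HG G. vnorm (A u) \<le> K * vnorm u"
    using A unfolding bounded_op_def by blast
  define K' where "K' = max K 0"
  have K': "vnorm (A u) \<le> K' * vnorm u" if "u \<in> HG G" for u
  proof -
    have "0 \<le> vnorm u" by (simp add: vnorm_def infsum_nonneg)
    hence "K * vnorm u \<le> K' * vnorm u" by (simp add: K'_def mult_right_mono)
    thus ?thesis using K that by force
  qed
  have K'0: "0 \<le> K'" by (simp add: K'_def)
  define e where "e = cmod (A f h)"
  have e0: "e > 0" using ne by (simp add: e_def)
  define \<delta> where "\<delta> = (e / (K' + 1))\<^sup>2"
  have d0: "\<delta> > 0" using e0 K'0 by (simp add: \<delta>_def)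
  have sU: "(\<lambda>k. (cmod (f k))\<^sup>2) summable_on UNIV" using f HG_iff by blast
  have sF: "(\<lambda>k. (cmod (f k))\<^sup>2) summable_on FSG G"
    using summable_on_subset[OF sU] by blast
  obtain F where F: "finite F" "F \<subseteq> FSG G"
    "dist (sum (\<lambda>k. (cmod (f k))\<^sup>2) F) (infsum (\<lambda>k. (cmod (f k))\<^sup>2) (FSG G)) \<le> \<delta>/2"
    using infsum_finite_approximation[OF sF, of "\<delta>/2"] d0 by auto
  define r where "r = (\<lambda>k. if k \<in> F then 0 else f k)"
  have rHG: "r \<in> HG G" by (rule HG_dom[OF f, of _ 1]) (auto simp: r_def)
  have "A (\<lambda>k. (-1) * fr F k + f k) = (\<lambda>k. (-1) * A (fr F) k + A f k)"
    by (rule bop_lin[OF A frHG f])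
  moreover have "(\<lambda>k. (-1) * fr F k + f k) = r" by (auto simp: fr_def r_def)
  ultimately have Ar: "A r h = A f h" using fin[OF F(1,2)] by (metis add.left_neutral mult_zero_right)
  have "infsum (\<lambda>k. (cmod (r k))\<^sup>2) UNIV = infsum (\<lambda>k. (cmod (f k))\<^sup>2) (FSG G - F)"
    apply (rule infsum_cong_neutral)
    using f HG_iff[of f G] by (auto simp: r_def)
  also have "\<dots> = infsum (\<lambda>k. (cmod (f k))\<^sup>2) (FSG G) - sum (\<lambda>k. (cmod (f k))\<^sup>2) F"
    using infsum_Diff[OF sF _ F(2)] F(1) by simp
  also have "\<dots> \<le> \<delta>/2" using F(3) unfolding dist_real_def by linarith
  finally have "infsum (\<lambda>k. (cmod (r k))\<^sup>2) UNIV < \<delta>" using d0 by linarith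
  hence "vnorm r < sqrt \<delta>" unfolding vnorm_def using real_sqrt_less_mono by blast
  also have "sqrt \<delta> = e / (K' + 1)" using e0 K'0 by (simp add: \<delta>_def)
  finally have vr: "vnorm r < e / (K' + 1)" .
  have "e = cmod (A r h)" using Ar e_def by simp
  also have "\<dots> \<le> vnorm (A r)" by (rule HG_point_le[OF bop_HG[OF A]])
  also have "\<dots> \<le> K' * vnorm r" by (rule K'[OF rHG])
  also have "\<dots> \<le> K' * (e / (K' + 1))" using vr K'0 mult_left_mono[of "vnorm r" "e / (K' + 1)" K'] by linarith
  also have "\<dots> < e" using e0 K'0 by (simp add: field_simps)
  finally show False by simp
qed

definition Dg :: "('v, 'e) dgraph \<Rightarrow> (('v, 'e) fsg \<Rightarrow> complex) \<Rightarrow> ('v, 'e) op" where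
  "Dg G c = (\<lambda>f. if f \<in> HG G then (\<lambda>h. c h * f h) else (\<lambda>k. 0))"

lemma Dg_HG: assumes "\<forall>h. cmod (c h) \<le> K" "f \<in> HG G" shows "Dg G c f \<in> HG G"
  unfolding Dg_def using assms by (auto intro!: HG_dom[of f G _ K] simp: norm_mult mult_right_mono)

lemma Dg_bop: assumes K: "\<forall>h. cmod (c h) \<le> K" shows "bounded_op G (Dg G c)"
proof -
  have K0: "0 \<le> K" using K norm_ge_zero order_trans by blast
  have lin: "Dg G c (\<lambda>k. a * f k + g k) = (\<lambda>k. a * Dg G c f k + Dg G c g k)"
    if "f \<in> HG G" "g \<in> HG G" for f g a
    using that HG_lin[OF that, of a] by (auto simp: Dg_def algebra_simps)
  have bd: "vnorm (Dg G c f) \<le> K * vnorm f" if f: "f \<in> HG G" for f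
  proof -
    have s1: "(\<lambda>k. (cmod (Dg G c f k))\<^sup>2) summable_on UNIV"
      using Dg_HG[OF K f] HG_iff by blast
    have s2: "(\<lambda>k. K\<^sup>2 * (cmod (f k))\<^sup>2) summable_on UNIV"
      using f HG_iff summable_on_cmult_right by blast
    have "infsum (\<lambda>k. (cmod (Dg G c f k))\<^sup>2) UNIV \<le> infsum (\<lambda>k. K\<^sup>2 * (cmod (f k))\<^sup>2) UNIV"
    proof (rule infsum_mono[OF s1 s2])
      fix k
      have "cmod (Dg G c f k) \<le> K * cmod (f k)"
        using f K by (simp add: Dg_def norm_mult mult_right_mono)
      hence "(cmod (Dg G c f k))\<^sup>2 \<le> (K * cmod (f k))\<^sup>2" by (meson norm_ge_zero power_mono)
      thus "(cmod (Dg G c f k))\<^sup>2 \<le> K\<^sup>2 * (cmod (f k))\<^sup>2" by (simp add: power_mult_distrib)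
    qed
    also have "\<dots> = K\<^sup>2 * infsum (\<lambda>k. (cmod (f k))\<^sup>2) UNIV"
      by (rule infsum_cmult_right) (use f HG_iff in blast)
    finally have "sqrt (infsum (\<lambda>k. (cmod (Dg G c f k))\<^sup>2) UNIV) \<le> sqrt (K\<^sup>2 * infsum (\<lambda>k. (cmod (f k))\<^sup>2) UNIV)"
      using real_sqrt_le_mono by blast
    thus ?thesis using K0 by (simp add: vnorm_def real_sqrt_mult)
  qed
  show ?thesis unfolding bounded_op_def
    apply (intro conjI)
    using Dg_HG[OF K] apply blast
      apply (simp add: Dg_def)
    using lin apply blast
    using bd by blast
qed

lemma op_adj_eq:
  assumes B: "bounded_op G B" and idn: "\<forall>f\<in>HG G. \<forall>g\<in>HG G. ip (A f) g = ip f (B g)"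
  shows "op_adj G A = B"
proof -
  let ?P = "\<lambda>B. bounded_op G B \<and> (\<forall>f \<in> HG G. \<forall>g \<in> HG G. ip (A f) g = ip f (B g))"
  have "?P B" using assms by blast
  hence "?P (SOME B. ?P B)" by (rule someI[of ?P B])
  hence PB': "?P (op_adj G A)" unfolding op_adj_def .
  show ?thesis
  proof (rule ext)
    fix g
    show "op_adj G A g = B g"
    proof (cases "g \<in> HG G")
      case True
      show ?thesis
      proof (rule ext)
        fix h
        show "op_adj G A g h = B g h"
        proof (cases "h \<in> FSG G")
          case hT: True
          have "ip (xi h) (op_adj G A g) = ip (xi h) (B g)"
            using PB' idn xi_HG[OF hT] True by metis
          thus ?thesis by (simp add: ip_xi_left)
        next
          case False
          thus ?thesis using bop_HG[OF B] bop_HG[of G "op_adj G A"] PB' HG_iff by metis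
        qed
      qed
    next
      case False
      thus ?thesis using B PB' unfolding bounded_op_def by metis
    qed
  qed
qed

lemma Dg_adj: assumes K: "\<forall>h. cmod (c h) \<le> K"
  shows "op_adj G (Dg G c) = Dg G (\<lambda>h. cnj (c h))"
proof (rule op_adj_eq)
  show "bounded_op G (Dg G (\<lambda>h. cnj (c h)))" by (rule Dg_bop[of _ K]) (use K in simp)
  show "\<forall>f\<in>HG G. \<forall>g\<in>HG G. ip (Dg G c f) g = ip f (Dg G (\<lambda>h. cnj (c h)) g)"
    by (auto simp: ip_def Dg_def mult_ac)
qed

fun srcf :: "('v, 'e) dgraph \<Rightarrow> ('v, 'e) fsg \<Rightarrow> 'v" where
  "srcf G (Vx v) = v"
| "srcf G (Pth es) = gsrc G (hd es)"

lemma fmult_Vx: "fmult G (Vx v) h = Some k \<longleftrightarrow> h = k \<and> srcf G h = v"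
  by (cases h) auto

lemma the_eq_k: "k \<in> S \<Longrightarrow> P k \<Longrightarrow> (THE h. h \<in> S \<and> h = k \<and> P h) = k"
  by auto

lemma L_Vx: "L G (Vx v) = Dg G (\<lambda>k. if srcf G k = v then 1 else 0)"
proof (rule ext)
  fix f
  show "L G (Vx v) f = Dg G (\<lambda>k. if srcf G k = v then 1 else 0) f"
  proof (cases "f \<in> HG G")
    case True
    have "L G (Vx v) f k = (if srcf G k = v then 1 else 0) * f k" for k
    proof (cases "k \<in> FSG G")
      case True
      then show ?thesis using \<open>f \<in> HG G\<close> by (auto simp: L_def fmult_Vx the_eq_k)
    next
      case False
      then show ?thesis using \<open>f \<in> HG G\<close> HG_iff[of f G] by (auto simp: L_def fmult_Vx)
    qed
    then show ?thesis using True by (auto simp: Dg_def)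
  next
    case False
    then show ?thesis by (simp add: L_def Dg_def)
  qed
qed

lemma star_alg_diag:
  assumes "A \<in> star_alg G ((\<lambda>v. L G (Vx v)) ` UNIV)"
  shows "\<exists>c K. (\<forall>h. cmod (c h) \<le> K) \<and> A = Dg G c"
  using assms
proof (induction rule: star_alg.induct)
  case (base A)
  then obtain v where "A = L G (Vx v)" by auto
  then show ?case by (intro exI[of _ "\<lambda>k. if srcf G k = v then 1 else 0"] exI[of _ 1]) (simp add: L_Vx)
next
  case (add A B)
  then obtain c1 K1 c2 K2 where hh: "\<forall>h. cmod (c1 h) \<le> K1" "A = Dg G c1" "\<forall>h. cmod (c2 h) \<le> K2" "B = Dg G c2"
    by blast
  have "op_add A B = Dg G (\<lambda>h. c1 h + c2 h)"
  proof (rule ext)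
    fix f show "op_add A B f = Dg G (\<lambda>h. c1 h + c2 h) f"
      unfolding hh(2,4) op_add_def Dg_def by (cases "f \<in> HG G") (simp_all add: distrib_right)
  qed
  moreover have "\<forall>h. cmod (c1 h + c2 h) \<le> K1 + K2"
  proof
    fix h show "cmod (c1 h + c2 h) \<le> K1 + K2"
      using hh(1)[rule_format, of h] hh(3)[rule_format, of h] norm_triangle_ineq[of "c1 h" "c2 h"] by linarith
  qed
  ultimately show ?case by (intro exI[of _ "\<lambda>h. c1 h + c2 h"] exI[of _ "K1 + K2"] conjI)
next
  case (smult A a)
  then obtain c K where hh: "\<forall>h. cmod (c h) \<le> K" "A = Dg G c" by blast
  have "op_smult a A = Dg G (\<lambda>h. a * c h)"
  proof (rule ext)
    fix f show "op_smult a A f = Dg G (\<lambda>h. a * c h) f"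
      unfolding hh(2) op_smult_def Dg_def by (cases "f \<in> HG G") (simp_all add: mult.assoc)
  qed
  moreover have "\<forall>h. cmod (a * c h) \<le> cmod a * K"
  proof
    fix h show "cmod (a * c h) \<le> cmod a * K"
      unfolding norm_mult by (rule mult_left_mono[OF hh(1)[rule_format] norm_ge_zero])
  qed
  ultimately show ?case by (intro exI[of _ "\<lambda>h. a * c h"] exI[of _ "cmod a * K"] conjI)
next
  case (comp A B)
  then obtain c1 K1 c2 K2 where hh: "\<forall>h. cmod (c1 h) \<le> K1" "A = Dg G c1" "\<forall>h. cmod (c2 h) \<le> K2" "B = Dg G c2"
    by blast
  have "A \<circ> B = Dg G (\<lambda>h. c1 h * c2 h)"
  proof (rule ext)
    fix f show "(A \<circ> B) f = Dg G (\<lambda>h. c1 h * c2 h) f"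
    proof (cases "f \<in> HG G")
      case True
      have "Dg G c2 f \<in> HG G" by (rule Dg_HG[OF hh(3) True])
      then show ?thesis unfolding hh(2,4) using True by (simp add: Dg_def mult.assoc)
    next
      case False
      then show ?thesis unfolding hh(2,4) using zero_HG[of G] by (simp add: Dg_def)
    qed
  qed
  moreover have "\<forall>h. cmod (c1 h * c2 h) \<le> K1 * K2"
  proof
    fix h
    have "0 \<le> K1" using hh(1) norm_ge_zero order_trans by blast
    thus "cmod (c1 h * c2 h) \<le> K1 * K2"
      unfolding norm_mult by (rule mult_mono[OF hh(1)[rule_format] hh(3)[rule_format] _ norm_ge_zero])
  qed
  ultimately show ?case by (intro exI[of _ "\<lambda>h. c1 h * c2 h"] exI[of _ "K1 * K2"] conjI)
next
  case (adj A)
  then obtain c K where hh: "\<forall>h. cmod (c h) \<le> K" "A = Dg G c" by blast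
  have "op_adj G A = Dg G (\<lambda>h. cnj (c h))" unfolding hh(2) by (rule Dg_adj[OF hh(1)])
  moreover have "\<forall>h. cmod (cnj (c h)) \<le> K" using hh by simp
  ultimately show ?case by (intro exI[of _ "\<lambda>h. cnj (c h)"] exI[of _ K] conjI)
qed

lemma DG_prop:
  assumes d: "d \<in> DG G"
  shows "bounded_op G d" "f \<in> HG G \<Longrightarrow> f h = 0 \<Longrightarrow> d f h = 0"
proof -
  show bd: "bounded_op G d" using d by (simp add: DG_def wot_closure_def)
  assume f: "f \<in> HG G" and fh: "f h = 0"
  show "d f h = 0"
  proof (cases "h \<in> FSG G")
    case False
    then show ?thesis using bop_HG[OF bd] HG_iff by metis
  next
    case True
    have "cmod (d f h) < \<epsilon>" if e: "\<epsilon> > 0" for \<epsilon>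
    proof -
      have fin: "finite {(f, xi h)}" and sub: "{(f, xi h)} \<subseteq> HG G \<times> HG G" using f xi_HG[OF True] by auto
      have W: "\<forall>F. finite F \<longrightarrow> F \<subseteq> HG G \<times> HG G \<longrightarrow>
        (\<forall>\<epsilon>>0. \<exists>B\<in>star_alg G ((\<lambda>v. L G (Vx v)) ` UNIV). \<forall>(f, g)\<in>F. cmod (ip (d f) g - ip (B f) g) < \<epsilon>)"
        using d unfolding DG_def wot_closure_def by simp
      obtain B where B: "B \<in> star_alg G ((\<lambda>v. L G (Vx v)) ` UNIV)"
        "cmod (ip (d f) (xi h) - ip (B f) (xi h)) < \<epsilon>"
        using W[rule_format, OF fin sub e] by auto
      obtain c K where "B = Dg G c" using star_alg_diag[OF B(1)] by blast
      hence "B f h = 0" using f fh by (simp add: Dg_def)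
      thus ?thesis using B(2) by (simp add: ip_xi_right)
    qed
    thus ?thesis by (metis less_irrefl zero_less_norm_iff)
  qed
qed

lemma FSG_Pth_ne: "Pth es \<in> FSG G \<Longrightarrow> es \<noteq> []"
  by (simp add: FSG_def)

lemma fm_inj:
  assumes "fmult G (Pth es) h1 = Some k" "fmult G (Pth es) h2 = Some k" "h1 \<in> FSG G" "h2 \<in> FSG G"
  shows "h1 = h2"
  using assms by (cases h1; cases h2) (auto simp: FSG_def split: if_splits)

lemma fm_res:
  assumes "fmult G (Pth es) h = Some k" "es \<noteq> []"
  shows "\<exists>fs. k = Pth fs" "srcf G k = gsrc G (hd es)" "srcf G h = grng G (last es)"
  using assms by (cases h; auto split: if_splits)+

definition Ladj :: "('v, 'e) dgraph \<Rightarrow> ('v, 'e) fsg \<Rightarrow> ('v, 'e) op" where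
  "Ladj G l f = (\<lambda>k. if f \<in> HG G \<and> k \<in> FSG G then (case fmult G l k of None \<Rightarrow> 0 | Some k' \<Rightarrow> f k') else 0)"

lemma L_Pth_xi:
  assumes l: "Pth es \<in> FSG G" and g: "g \<in> FSG G"
  shows "ip (L G (Pth es) (xi g)) (xi h) = (if fmult G (Pth es) g = Some h then 1 else 0)"
proof -
  have x: "xi g \<in> HG G" by (rule xi_HG[OF g])
  show ?thesis
  proof (cases "\<exists>h'\<in>FSG G. fmult G (Pth es) h' = Some h")
    case True
    then obtain h' where h': "h' \<in> FSG G" "fmult G (Pth es) h' = Some h" by blast
    have T: "(THE h'. h' \<in> FSG G \<and> fmult G (Pth es) h' = Some h) = h'"
      by (rule the_equality) (use h' fm_inj in auto)
    have E: "fmult G (Pth es) g = Some h \<longleftrightarrow> g = h'" using h' g fm_inj by metis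
    have "L G (Pth es) (xi g) h = xi g (THE h'. h' \<in> FSG G \<and> fmult G (Pth es) h' = Some h)"
      using x True by (simp add: L_def)
    also have "\<dots> = xi g h'" by (simp only: T)
    finally have "ip (L G (Pth es) (xi g)) (xi h) = xi g h'" by (simp only: ip_xi_right)
    thus ?thesis using E by (simp add: xi_def)
  next
    case False
    then show ?thesis using x g by (auto simp: L_def ip_xi_right)
  qed
qed

lemma Ladj_HG_bound:
  assumes f: "f \<in> HG G"
  shows "Ladj G l f \<in> HG G" "vnorm (Ladj G l f) \<le> 1 * vnorm f"
proof -
  define A where "A = {h \<in> FSG G. fmult G l h \<noteq> None}"
  define \<phi> where "\<phi> h = the (fmult G l h)" for h
  have inj: "inj_on \<phi> A"
  proof (rule inj_onI)
    fix x y assume "x \<in> A" "y \<in> A" "\<phi> x = \<phi> y"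
    then obtain k where "fmult G l x = Some k" "fmult G l y = Some k" "x \<in> FSG G" "y \<in> FSG G"
      by (auto simp: A_def \<phi>_def)
    thus "x = y" by (cases l) (auto split: if_splits simp: fm_inj fmult_Vx)
  qed
  have sU: "(\<lambda>k. (cmod (f k))\<^sup>2) summable_on UNIV" using f HG_iff by blast
  have e1: "infsum (\<lambda>k. (cmod (Ladj G l f k))\<^sup>2) UNIV = infsum ((\<lambda>k. (cmod (f k))\<^sup>2) \<circ> \<phi>) A"
    by (rule infsum_cong_neutral) (use f in \<open>auto simp: Ladj_def A_def \<phi>_def split: option.splits\<close>)
  have e2: "(\<lambda>k. (cmod (Ladj G l f k))\<^sup>2) summable_on UNIV \<longleftrightarrow> ((\<lambda>k. (cmod (f k))\<^sup>2) \<circ> \<phi>) summable_on A"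
    by (rule summable_on_cong_neutral) (use f in \<open>auto simp: Ladj_def A_def \<phi>_def split: option.splits\<close>)
  have s\<phi>: "(\<lambda>k. (cmod (f k))\<^sup>2) summable_on (\<phi> ` A)" using summable_on_subset[OF sU] by blast
  hence sA: "((\<lambda>k. (cmod (f k))\<^sup>2) \<circ> \<phi>) summable_on A" using summable_on_reindex[OF inj] by blast
  show "Ladj G l f \<in> HG G"
    unfolding HG_iff using e2 sA by (auto simp: Ladj_def)
  have "infsum (\<lambda>k. (cmod (Ladj G l f k))\<^sup>2) UNIV = infsum (\<lambda>k. (cmod (f k))\<^sup>2) (\<phi> ` A)"
    by (simp add: e1 infsum_reindex[OF inj])
  also have "\<dots> \<le> infsum (\<lambda>k. (cmod (f k))\<^sup>2) UNIV"
    by (rule infsum_mono_neutral[OF s\<phi> sU]) auto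
  finally show "vnorm (Ladj G l f) \<le> 1 * vnorm f"
    unfolding vnorm_def using real_sqrt_le_mono by simp
qed

lemma Ladj_bop: "bounded_op G (Ladj G l)"
proof -
  have lin: "Ladj G l (\<lambda>k. a * f k + g k) = (\<lambda>k. a * Ladj G l f k + Ladj G l g k)"
    if "f \<in> HG G" "g \<in> HG G" for f g a
    using that HG_lin[OF that, of a] by (auto simp: Ladj_def split: option.splits)
  show ?thesis unfolding bounded_op_def
    apply (intro conjI)
    using Ladj_HG_bound(1) apply blast
      apply (simp add: Ladj_def)
    using lin apply blast
    using Ladj_HG_bound(2) by blast
qed

lemma L_Pth_adj: fixes G :: "('v, 'e) dgraph" shows "op_adj G (L G (Pth es)) = Ladj G (Pth es)"
proof (rule op_adj_eq[OF Ladj_bop], intro ballI)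
  fix f g assume f: "f \<in> HG G" and g: "g \<in> HG G"
  define l :: "('v, 'e) fsg" where "l = Pth es"
  define A where "A = {h \<in> FSG G. fmult G l h \<noteq> None}"
  define \<phi> where "\<phi> h = the (fmult G l h)" for h
  have inj: "inj_on \<phi> A"
  proof (rule inj_onI)
    fix x y assume "x \<in> A" "y \<in> A" "\<phi> x = \<phi> y"
    then obtain k where "fmult G l x = Some k" "fmult G l y = Some k" "x \<in> FSG G" "y \<in> FSG G"
      by (auto simp: A_def \<phi>_def)
    thus "x = y" unfolding l_def by (rule fm_inj)
  qed
  have Lval: "L G l f (\<phi> h) = f h" if h: "h \<in> A" for h
  proof -
    obtain k where k: "fmult G l h = Some k" "h \<in> FSG G" using h by (auto simp: A_def)
    have T: "(THE h'. h' \<in> FSG G \<and> fmult G l h' = Some k) = h"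
      by (rule the_equality) (use k fm_inj in \<open>auto simp: l_def\<close>)
    have "\<phi> h = k" using k by (simp add: \<phi>_def)
    moreover have "L G l f k = f (THE h'. h' \<in> FSG G \<and> fmult G l h' = Some k)"
      using f k by (auto simp: L_def l_def)
    ultimately show ?thesis using T by simp
  qed
  have Lout: "L G l f k = 0" if "k \<notin> \<phi> ` A" for k
  proof -
    have "\<not> (\<exists>h\<in>FSG G. fmult G l h = Some k)"
    proof
      assume "\<exists>h\<in>FSG G. fmult G l h = Some k"
      then obtain h where "h \<in> FSG G" "fmult G l h = Some k" by blast
      hence "h \<in> A" "\<phi> h = k" by (auto simp: A_def \<phi>_def)
      thus False using that by blast
    qed
    thus ?thesis using f by (simp add: L_def l_def)
  qed
  have Aval: "Ladj G l g h = g (\<phi> h)" if "h \<in> A" for h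
    using that g by (auto simp: Ladj_def A_def \<phi>_def split: option.splits)
  have Aout: "Ladj G l g h = 0" if "h \<notin> A" for h
    using that by (auto simp: Ladj_def A_def split: option.splits)
  have "ip (L G l f) g = infsum (\<lambda>k. L G l f k * cnj (g k)) (\<phi> ` A)"
    unfolding ip_def by (rule infsum_cong_neutral) (auto simp: Lout)
  also have "\<dots> = infsum ((\<lambda>k. L G l f k * cnj (g k)) \<circ> \<phi>) A"
    by (rule infsum_reindex[OF inj])
  also have "\<dots> = infsum (\<lambda>h. f h * cnj (Ladj G l g h)) A"
    by (rule infsum_cong) (simp add: Lval Aval)
  also have "\<dots> = ip f (Ladj G l g)"
    unfolding ip_def by (rule infsum_cong_neutral) (auto simp: Aout)
  finally show "ip (L G (Pth es) f) g = ip f (Ladj G (Pth es) g)" by (simp add: l_def)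
qed

lemma Ladj_xi:
  assumes g: "g \<in> FSG G" and h: "h \<in> FSG G"
  shows "ip (op_adj G (L G (Pth es)) (xi g)) (xi h) = (if fmult G (Pth es) h = Some g then 1 else 0)"
  unfolding L_Pth_adj ip_xi_right using xi_HG[OF g] h by (auto simp: Ladj_def xi_def split: option.splits)

lemma Vx_FSG: "Vx v \<in> FSG G" by (simp add: FSG_def)

lemma vnorm_zero: "vnorm (\<lambda>k. 0 :: complex) = 0" by (simp add: vnorm_def)

lemma op_zero_DG: "op_zero \<in> DG G"
proof -
  note vz = vnorm_zero
  have b: "bounded_op G op_zero" unfolding bounded_op_def op_zero_def
    using zero_HG[of G] by (auto intro!: exI[of _ 0] simp: vnorm_def)
  have "op_smult 0 (L G (Vx undefined)) \<in> star_alg G ((\<lambda>v. L G (Vx v)) ` UNIV)"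
    by (intro star_alg.smult star_alg.base) simp
  moreover have "op_smult 0 (L G (Vx undefined)) = op_zero" by (simp add: op_smult_def op_zero_def)
  ultimately have "op_zero \<in> star_alg G ((\<lambda>v. L G (Vx v)) ` UNIV)" by simp
  hence "\<forall>F. finite F \<longrightarrow> F \<subseteq> HG G \<times> HG G \<longrightarrow>
       (\<forall>\<epsilon>>0. \<exists>B\<in>star_alg G (range (\<lambda>v. L G (Vx v))). \<forall>(f, g)\<in>F. cmod (ip (op_zero f) g - ip (B f) g) < \<epsilon>)"
    by (intro allI impI bexI[of _ op_zero]) auto
  thus ?thesis using b unfolding DG_def wot_closure_def by blast
qed

lemma condexp_zero: "condexp G op_zero = op_zero"
  by (auto simp: condexp_def vcoeff_def op_zero_def ip_def)

locale setting =
  fixes G :: "('v, 'e) dgraph" and x :: "('v, 'e) op" and v1 v2 :: 'v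
  assumes neq: "v1 \<noteq> v2"
    and xb: "bounded_op G x"
    and xA: "\<And>g h. g \<in> FSG G \<Longrightarrow> srcf G h \<noteq> v1 \<Longrightarrow> x (xi g) h = 0"
    and xB: "\<And>g h. g \<in> FSG G \<Longrightarrow> srcf G g \<noteq> v2 \<Longrightarrow> x (xi g) h = 0"
    and xC: "\<And>a b. x (xi (Vx a)) (Vx b) = 0"
begin

definition C :: "('v, 'e) op set" where "C = {a. \<exists>d\<in>DG G. a = d \<circ> x}"

lemma X1: "f \<in> HG G \<Longrightarrow> srcf G h \<noteq> v1 \<Longrightarrow> x f h = 0"
  by (rule det[OF xb]) (auto simp: xA)

lemma X2: assumes f: "f \<in> HG G" and s: "\<forall>h. srcf G h \<noteq> v1 \<longrightarrow> f h = 0"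
  shows "x f h = 0"
  by (rule det[OF xb f]) (use s neq xB in metis)

lemma X1': assumes "srcf G h \<noteq> v1" shows "x g h = 0"
proof (cases "g \<in> HG G")
  case True then show ?thesis using X1 assms by blast
next
  case False then show ?thesis using xb unfolding bounded_op_def by simp
qed

lemma xdx: assumes d: "d \<in> DG G" shows "x (d (x g)) = (\<lambda>k. 0)"
proof
  fix h
  have xg: "x g \<in> HG G" by (rule bop_HG[OF xb])
  have "d (x g) \<in> HG G" by (rule bop_HG[OF DG_prop(1)[OF d]])
  moreover have "\<forall>h. srcf G h \<noteq> v1 \<longrightarrow> d (x g) h = 0"
    using DG_prop(2)[OF d xg] X1' by blast
  ultimately show "x (d (x g)) h = 0" by (rule X2)
qed

lemma C_HG: "a \<in> C \<Longrightarrow> a f \<in> HG G"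
  unfolding C_def using DG_prop(1) bop_HG by fastforce

lemma prod_HG: "set as \<subseteq> C \<Longrightarrow> prod_ops G as f \<in> HG G"
  by (induction as) (auto simp: op_id_def zero_HG C_HG)

lemma mom2: assumes "set as \<subseteq> C" "2 \<le> length as" shows "prod_ops G as = op_zero"
proof -
  obtain a1 a2 r where as: "as = a1 # a2 # r" using assms(2)
    by (metis One_nat_def Suc_1 Suc_le_length_iff)
  obtain d1 d2 where d: "d1 \<in> DG G" "d2 \<in> DG G" "a1 = d1 \<circ> x" "a2 = d2 \<circ> x"
    using assms(1) as unfolding C_def by auto
  show ?thesis
  proof
    fix f
    show "prod_ops G as f = op_zero f"
      using as d xdx[OF d(2)] bop_zero[OF DG_prop(1)[OF d(1)]] by (simp add: op_zero_def)
  qed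
qed

lemma mom1: assumes "a \<in> C" shows "condexp G (prod_ops G [a]) = op_zero"
proof -
  obtain d where d: "d \<in> DG G" "a = d \<circ> x" using assms unfolding C_def by auto
  have "vcoeff G (prod_ops G [a]) v = 0" for v
  proof -
    have "xi (Vx v) \<in> HG G" by (rule xi_HG[OF Vx_FSG])
    hence "op_id G (xi (Vx v)) = xi (Vx v)" by (simp add: op_id_def)
    moreover have "d (x (xi (Vx v))) (Vx v) = 0"
      by (rule DG_prop(2)[OF d(1) bop_HG[OF xb] xC])
    ultimately show ?thesis using d by (simp add: vcoeff_def ip_xi_right)
  qed
  thus ?thesis by (auto simp: condexp_def op_zero_def)
qed

lemma mom: assumes "set as \<subseteq> C" "as \<noteq> []" shows "condexp G (prod_ops G as) = op_zero"
proof (cases "length as = 1")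
  case True
  then obtain a where "as = [a]" by (metis One_nat_def length_0_conv length_Suc_conv)
  then show ?thesis using mom1 assms by auto
next
  case False
  have "length as \<noteq> 0" using assms(2) by simp
  then have "2 \<le> length as" using False by linarith
  then show ?thesis using mom2[OF assms(1)] condexp_zero by simp
qed

lemma C_id: "a \<in> C \<Longrightarrow> a \<circ> op_id G \<in> C"
proof -
  assume "a \<in> C"
  then obtain d where d: "d \<in> DG G" "a = d \<circ> x" unfolding C_def by auto
  have "x \<circ> op_id G = x"
  proof
    fix f show "(x \<circ> op_id G) f = x f"
      using xb bop_zero[OF xb] by (auto simp: op_id_def bounded_op_def)
  qed
  hence "a \<circ> op_id G = d \<circ> x" using d by (simp add: comp_assoc)
  thus ?thesis using d unfolding C_def by blast
qed

lemma C_zero: "a \<in> C \<Longrightarrow> a \<circ> op_zero \<in> C"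
proof -
  assume "a \<in> C"
  then obtain d where d: "d \<in> DG G" "a = d \<circ> x" unfolding C_def by auto
  have "a \<circ> op_zero = op_zero \<circ> x"
    using d bop_zero[OF xb] bop_zero[OF DG_prop(1)[OF d(1)]] by (auto simp: op_zero_def)
  thus ?thesis using op_zero_DG unfolding C_def by blast
qed

lemma Eprod_C: assumes "set Ls \<subseteq> C" "a \<in> C" shows "a \<circ> Eprod G Ls \<in> C"
  using assms mom C_id C_zero by (auto simp: Eprod_def)

lemma blk_C:
  assumes as: "set as \<subseteq> C" and I: "I \<subseteq> {1..<length as}" and ne: "as \<noteq> []"
  shows "set (blk_args G as (0 # sorted_list_of_set I)) \<subseteq> C"
proof -
  let ?is = "0 # sorted_list_of_set I"
  have fin: "finite I" using I finite_subset by blast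
  have idx: "i < length as" if "i \<in> set ?is" for i
    using that I fin ne by auto
  have el: "as ! (?is ! j) \<in> C" if "j < length ?is" for j
    using idx[OF nth_mem[OF that]] as nth_mem by blast
  have sub: "set (take n (drop m as)) \<subseteq> C" for n m
    using as by (meson in_set_dropD in_set_takeD subset_iff)
  show ?thesis
    unfolding blk_args_def using el Eprod_C[OF sub] by auto
qed

lemma kap: "set as \<subseteq> C \<Longrightarrow> kapf G m as = op_zero"
proof (induction m arbitrary: as)
  case 0
  then show ?case by simp
next
  case (Suc m)
  show ?case
  proof (cases "as = []")
    case True
    then show ?thesis by simp
  next
    case False
    have z: "(let is = 0 # sorted_list_of_set I in kapf G m (blk_args G as is) \<circ> Eprod G (drop (last is + 1) as)) = op_zero"
      if "I \<in> {I. I \<subseteq> {1..<length as} \<and> I \<noteq> {1..<length as}}" for I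
      using Suc.IH[OF blk_C[OF Suc.prems _ False]] that by (auto simp: Let_def op_zero_def)
    have "op_sum (\<lambda>I. let is = 0 # sorted_list_of_set I in kapf G m (blk_args G as is) \<circ> Eprod G (drop (last is + 1) as))
        {I. I \<subseteq> {1..<length as} \<and> I \<noteq> {1..<length as}} = op_zero"
      unfolding op_sum_def using z by (simp add: op_zero_def)
    then show ?thesis using False mom[OF Suc.prems False] by (simp add: op_diff_def op_zero_def)
  qed
qed

end


lemma fm_notVx: "fmult G (Pth es) h \<noteq> Some (Vx b)"
  by (cases h) auto

lemma pft: "l \<in> paths_from_to G a b \<Longrightarrow> \<exists>es. l = Pth es \<and> Pth es \<in> FSG G \<and> es \<noteq> [] \<and> gsrc G (hd es) = a \<and> grng G (last es) = b"
  unfolding paths_from_to_def using FSG_Pth_ne by blast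

lemma x_zero:
  fixes G :: "('v, 'e) dgraph"
  assumes hyp: "\<forall>g \<in> FSG G. \<forall>h \<in> FSG G.
           ip (x (xi g)) (xi h) =
             infsum (\<lambda>l. p1 l * ip (L G l (xi g)) (xi h)) (paths_from_to G v1 v2)
           + infsum (\<lambda>l. p2 l * ip (op_adj G (L G l) (xi g)) (xi h)) (paths_from_to G v2 v1)"
    and g: "g \<in> FSG G" and h: "h \<in> FSG G"
    and n1: "\<And>l. l \<in> paths_from_to G v1 v2 \<Longrightarrow> fmult G l g \<noteq> Some h"
    and n2: "\<And>l. l \<in> paths_from_to G v2 v1 \<Longrightarrow> fmult G l h \<noteq> Some g"
  shows "x (xi g) h = 0"
proof -
  have a: "infsum (\<lambda>l. p1 l * ip (L G l (xi g)) (xi h)) (paths_from_to G v1 v2) = 0"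
  proof (rule infsum_0)
    fix l assume l: "l \<in> paths_from_to G v1 v2"
    obtain es where e: "l = Pth es" "Pth es \<in> FSG G" using pft[OF l] by auto
    have "ip (L G (Pth es) (xi g)) (xi h) = (if fmult G (Pth es) g = Some h then 1 else 0)"
      by (rule L_Pth_xi[OF e(2) g])
    thus "p1 l * ip (L G l (xi g)) (xi h) = 0" using n1[OF l] e(1) by simp
  qed
  have b: "infsum (\<lambda>l. p2 l * ip (op_adj G (L G l) (xi g)) (xi h)) (paths_from_to G v2 v1) = 0"
  proof (rule infsum_0)
    fix l assume l: "l \<in> paths_from_to G v2 v1"
    obtain es where e: "l = Pth es" using pft[OF l] by auto
    have "ip (op_adj G (L G (Pth es)) (xi g)) (xi h) = (if fmult G (Pth es) h = Some g then 1 else 0)"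
      by (rule Ladj_xi[OF g h])
    thus "p2 l * ip (op_adj G (L G l) (xi g)) (xi h) = 0" using n2[OF l] e by simp
  qed
  have "x (xi g) h = ip (x (xi g)) (xi h)" by (simp add: ip_xi_right)
  also have "\<dots> = infsum (\<lambda>l. p1 l * ip (L G l (xi g)) (xi h)) (paths_from_to G v1 v2)
           + infsum (\<lambda>l. p2 l * ip (op_adj G (L G l) (xi g)) (xi h)) (paths_from_to G v2 v1)"
    by (rule hyp[rule_format, OF g h])
  also have "\<dots> = 0" by (simp only: a b add_0)
  finally show ?thesis .
qed

theorem mainTheorem2:
  fixes G :: "('v::countable, 'e::countable) dgraph"
    and v1 v2 :: 'v
    and x :: "('v, 'e) op"
    and p1 p2 :: "('v, 'e) fsg \<Rightarrow> complex"
    and n :: nat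
    and ds :: "('v, 'e) op list"
  assumes "v1 \<noteq> v2"
    and "x \<in> WstarG G"
    and "\<forall>g \<in> FSG G. \<forall>h \<in> FSG G.
           ip (x (xi g)) (xi h) =
             infsum (\<lambda>l. p1 l * ip (L G l (xi g)) (xi h)) (paths_from_to G v1 v2)
           + infsum (\<lambda>l. p2 l * ip (op_adj G (L G l) (xi g)) (xi h)) (paths_from_to G v2 v1)"
    and "n \<ge> 1"
    and "length ds = n"
    and "set ds \<subseteq> DG G"
  shows "condexp G (prod_ops G (map (\<lambda>d. d \<circ> x) ds)) = op_zero
       \<and> cumulant G (map (\<lambda>d. d \<circ> x) ds) = op_zero"
proof -
  note hyp = assms(3)
  have xb: "bounded_op G x" using assms(2) by (simp add: WstarG_def wot_closure_def)
  have out: "x (xi g) h = 0" if "h \<notin> FSG G" for g h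
    using bop_HG[OF xb] that HG_iff by metis
  have xA: "x (xi g) h = 0" if g: "g \<in> FSG G" and sh: "srcf G h \<noteq> v1" for g h
  proof (cases "h \<in> FSG G")
    case False then show ?thesis using out by blast
  next
    case True
    show ?thesis
    proof (rule x_zero[OF hyp g True])
      fix l assume l: "l \<in> paths_from_to G v1 v2"
      obtain es where e: "l = Pth es" "es \<noteq> []" "gsrc G (hd es) = v1" using pft[OF l] by auto
      show "fmult G l g \<noteq> Some h"
      proof
        assume "fmult G l g = Some h"
        hence "fmult G (Pth es) g = Some h" using e(1) by simp
        from fm_res(2)[OF this e(2)] show False using e(3) sh by simp
      qed
    next
      fix l assume l: "l \<in> paths_from_to G v2 v1"
      obtain es where e: "l = Pth es" "es \<noteq> []" "grng G (last es) = v1" using pft[OF l] by auto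
      show "fmult G l h \<noteq> Some g"
      proof
        assume "fmult G l h = Some g"
        hence "fmult G (Pth es) h = Some g" using e(1) by simp
        from fm_res(3)[OF this e(2)] show False using e(3) sh by simp
      qed
    qed
  qed
  have xB: "x (xi g) h = 0" if g: "g \<in> FSG G" and sg: "srcf G g \<noteq> v2" for g h
  proof (cases "h \<in> FSG G")
    case False then show ?thesis using out by blast
  next
    case True
    show ?thesis
    proof (rule x_zero[OF hyp g True])
      fix l assume l: "l \<in> paths_from_to G v1 v2"
      obtain es where e: "l = Pth es" "es \<noteq> []" "grng G (last es) = v2" using pft[OF l] by auto
      show "fmult G l g \<noteq> Some h"
      proof
        assume "fmult G l g = Some h"
        hence "fmult G (Pth es) g = Some h" using e(1) by simp
        from fm_res(3)[OF this e(2)] show False using e(3) sg by simp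
      qed
    next
      fix l assume l: "l \<in> paths_from_to G v2 v1"
      obtain es where e: "l = Pth es" "es \<noteq> []" "gsrc G (hd es) = v2" using pft[OF l] by auto
      show "fmult G l h \<noteq> Some g"
      proof
        assume "fmult G l h = Some g"
        hence "fmult G (Pth es) h = Some g" using e(1) by simp
        from fm_res(2)[OF this e(2)] show False using e(3) sg by simp
      qed
    qed
  qed
  have xC: "x (xi (Vx a)) (Vx b) = 0" for a b
  proof (rule x_zero[OF hyp Vx_FSG[of a G] Vx_FSG[of b G]])
    fix l assume l: "l \<in> paths_from_to G v1 v2"
    obtain es where e: "l = Pth es" using pft[OF l] by auto
    show "fmult G l (Vx a) \<noteq> Some (Vx b)" unfolding e by (rule fm_notVx)
  next
    fix l assume l: "l \<in> paths_from_to G v2 v1"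
    obtain es where e: "l = Pth es" using pft[OF l] by auto
    show "fmult G l (Vx b) \<noteq> Some (Vx a)" unfolding e by (rule fm_notVx)
  qed
  interpret S: setting G x v1 v2
    by (rule setting.intro[OF assms(1) xb xA xB xC])
  have sub: "set (map (\<lambda>d. d \<circ> x) ds) \<subseteq> S.C" using assms(6) unfolding S.C_def by auto
  have ne: "map (\<lambda>d. d \<circ> x) ds \<noteq> []" using assms(4,5) by auto
  show ?thesis using S.mom[OF sub ne] S.kap[OF sub] by (simp add: cumulant_def)
qed

end
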